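(* There is a universal constant $C\geq1$ such that the following holds. Let $s\in\mathbb{N}$ and let $T$ be the set of all 1-Lipschitz functions $f:\mathbb{R}^{s}\to\mathbb{R}$ with $f(0)=0$. For $0<\delta\leq1$ define on $T$ the norm \[\|f\|_{(\delta)}=\sup_{x\in\mathbb{R}^{s}}\frac{|f(x)|}{\|x\|_{2}^{1+\delta}+1}.\] Then for all $\epsilon>0$ and $0<\delta\leq 1$, \[\log N(T,\|\cdot\|_{(\delta)},\epsilon)\leq\left(\frac{C\sqrt{s}}{\epsilon}\right)^{s}\frac{1}{\delta}.\]
   Context: 1-Lipschitz means $|f(x)-f(y)|\leq\|x-y\|_{2}$ for the Euclidean norm. For a metric space $(T,\rho)$, the covering number $N(T,\rho,\epsilon)$ is the smallest size of $S\subset T$ such that every element of $T$ is within distance $\epsilon$ of some element of $S$ (here $\rho(f,h)=\|f-h\|_{(\delta)}$). *)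

theory Defs
  imports "HOL-Analysis.Analysis" "HOL-Library.Extended_Nat"
begin

text \<open>R^s is represented by functions nat \<Rightarrow> real vanishing at indices \<ge> s.\<close>
definition Rs :: "nat \<Rightarrow> (nat \<Rightarrow> real) set" where
  "Rs s = {x. \<forall>i\<ge>s. x i = 0}"

definition enorm :: "nat \<Rightarrow> (nat \<Rightarrow> real) \<Rightarrow> real" where
  "enorm s x = L2_set x {..<s}"

definition LipT :: "nat \<Rightarrow> ((nat \<Rightarrow> real) \<Rightarrow> real) set" where
  "LipT s = {f. (\<forall>x\<in>Rs s. \<forall>y\<in>Rs s. \<bar>f x - f y\<bar> \<le> enorm s (\<lambda>i. x i - y i))
               \<and> f (\<lambda>_. 0) = 0 \<and> (\<forall>x. x \<notin> Rs s \<longrightarrow> f x = 0)}"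

definition delta_dist :: "nat \<Rightarrow> real \<Rightarrow> ((nat \<Rightarrow> real) \<Rightarrow> real) \<Rightarrow> ((nat \<Rightarrow> real) \<Rightarrow> real) \<Rightarrow> real" where
  "delta_dist s \<delta> f h = (SUP x\<in>Rs s. \<bar>f x - h x\<bar> / (enorm s x powr (1 + \<delta>) + 1))"

definition covering_number :: "'a set \<Rightarrow> ('a \<Rightarrow> 'a \<Rightarrow> real) \<Rightarrow> real \<Rightarrow> enat" where
  "covering_number T \<rho> \<epsilon> =
     (INF S\<in>{S. S \<subseteq> T \<and> (\<forall>t\<in>T. \<exists>u\<in>S. \<rho> t u \<le> \<epsilon>)}.
        if finite S then enat (card S) else \<infinity>)"

end

theory Submission
  imports Defs
begin

lemma cov_from_code:
  fixes code :: "'a \<Rightarrow> 'b" and T :: "'a set"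
  assumes fin: "finite F" and sub: "code ` T \<subseteq> F"
    and cl: "\<And>f g. f \<in> T \<Longrightarrow> g \<in> T \<Longrightarrow> code f = code g \<Longrightarrow> \<rho> f g \<le> \<epsilon>"
  shows "covering_number T \<rho> \<epsilon> \<noteq> \<infinity> \<and> the_enat (covering_number T \<rho> \<epsilon>) \<le> card F"
proof -
  define rep where "rep c = (SOME f. f \<in> T \<and> code f = c)" for c
  define S where "S = rep ` (code ` T)"
  have rep: "rep (code t) \<in> T \<and> code (rep (code t)) = code t" if "t \<in> T" for t
    unfolding rep_def by (rule someI_ex) (use that in blast)
  have finS: "finite S" unfolding S_def using fin sub finite_subset by blast
  have ST: "S \<subseteq> T" unfolding S_def using rep by blast
  have cardS: "card S \<le> card F"
    unfolding S_def using card_image_le card_mono fin sub finite_subset le_trans by metis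
  have cov: "\<forall>t\<in>T. \<exists>u\<in>S. \<rho> t u \<le> \<epsilon>"
  proof
    fix t assume t: "t \<in> T"
    show "\<exists>u\<in>S. \<rho> t u \<le> \<epsilon>"
      by (rule bexI[of _ "rep (code t)"]) (use rep[OF t] t cl in \<open>auto simp: S_def\<close>)
  qed
  have "covering_number T \<rho> \<epsilon> \<le> (if finite S then enat (card S) else \<infinity>)"
    unfolding covering_number_def by (rule INF_lower) (use finS ST cov in auto)
  then have le: "covering_number T \<rho> \<epsilon> \<le> enat (card S)" using finS by simp
  then obtain n where n: "covering_number T \<rho> \<epsilon> = enat n" "n \<le> card S"
    by (metis enat_ile enat_ord_simps(1))
  then show ?thesis using cardS by simp
qed

lemma ln_the_enat_le:
  assumes "the_enat N \<le> m" "1 \<le> m"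
  shows "ln (real (the_enat N)) \<le> ln (real m)"
proof (cases "the_enat N = 0")
  case True then show ?thesis using assms by simp
next
  case False then show ?thesis using assms by simp
qed

lemma Lip_abs_le:
  assumes "f \<in> LipT s" "x \<in> Rs s"
  shows "\<bar>f x\<bar> \<le> enorm s x"
proof -
  have z: "(\<lambda>_. 0) \<in> Rs s" by (simp add: Rs_def)
  have "\<bar>f x - f (\<lambda>_. 0)\<bar> \<le> enorm s (\<lambda>i. x i - 0)"
    using assms z unfolding LipT_def by blast
  then show ?thesis using assms unfolding LipT_def by simp
qed

lemma Lip_diff_le:
  assumes "f \<in> LipT s" "x \<in> Rs s" "y \<in> Rs s"
  shows "\<bar>f x - f y\<bar> \<le> enorm s (\<lambda>i. x i - y i)"
  using assms unfolding LipT_def by blast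

lemma delta_dist_le:
  assumes "\<And>x. x \<in> Rs s \<Longrightarrow> \<bar>f x - g x\<bar> \<le> \<epsilon> * (enorm s x powr (1 + \<delta>) + 1)"
  shows "delta_dist s \<delta> f g \<le> \<epsilon>"
  unfolding delta_dist_def
proof (rule cSUP_least)
  show "Rs s \<noteq> {}" by (auto simp: Rs_def)
next
  fix x assume "x \<in> Rs s"
  moreover have "enorm s x powr (1 + \<delta>) + 1 > 0"
    by (simp add: add_nonneg_pos)
  ultimately show "\<bar>f x - g x\<bar> / (enorm s x powr (1 + \<delta>) + 1) \<le> \<epsilon>"
    using assms by (simp add: divide_le_eq)
qed


locale covsetup =
  fixes s :: nat and \<epsilon> \<delta> :: real and M :: nat
  assumes s1: "1 \<le> s" and epos: "0 < \<epsilon>" and dpos: "0 < \<delta>" and dle: "\<delta> \<le> 1"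
    and Mlow: "2 / \<epsilon> \<le> 2 powr (real M * \<delta>)"
    and Mhigh: "2 powr (real M * \<delta>) \<le> 4 / \<epsilon>"
begin

definition h :: "nat \<Rightarrow> real" where
  "h k = \<epsilon> * 2 powr (real k * (1 + \<delta>)) / (8 * sqrt (real s))"

definition nn :: "nat \<Rightarrow> int" where
  "nn k = ceiling (2 ^ k / h k)"

definition I :: "nat \<Rightarrow> (nat \<Rightarrow> int) set" where
  "I k = PiE {..<s} (\<lambda>_. {- nn k..nn k})"

definition P :: "(nat \<times> (nat \<Rightarrow> int)) set" where
  "P = (SIGMA k:{..M}. I k)"

definition pt :: "nat \<Rightarrow> (nat \<Rightarrow> int) \<Rightarrow> (nat \<Rightarrow> real)" where
  "pt k i = (\<lambda>j. if j < s then h k * of_int (i j) else 0)"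

definition code :: "((nat \<Rightarrow> real) \<Rightarrow> real) \<Rightarrow> nat \<times> (nat \<Rightarrow> int) \<Rightarrow> int" where
  "code f = (\<lambda>(k, i). if (k, i) \<in> P then floor (f (pt k i) / h k) else 0)"

lemma hpos: "h k > 0"
  using epos s1 by (simp add: h_def)

lemma pt_Rs: "pt k i \<in> Rs s"
  by (simp add: pt_def Rs_def)

lemma finP: "finite P"
  unfolding P_def I_def by (intro finite_SigmaI finite_PiE) auto

definition isroot :: "(nat \<Rightarrow> int) \<Rightarrow> bool" where
  "isroot i = (\<forall>j<s. i j = 0)"

definition pidx :: "(nat \<Rightarrow> int) \<Rightarrow> nat" where
  "pidx i = (LEAST j. j < s \<and> i j \<noteq> 0)"

definition par :: "nat \<times> (nat \<Rightarrow> int) \<Rightarrow> nat \<times> (nat \<Rightarrow> int)" where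
  "par q = (fst q, (snd q)(pidx (snd q) := snd q (pidx (snd q)) - sgn (snd q (pidx (snd q)))))"

definition mu :: "(nat \<Rightarrow> int) \<Rightarrow> nat" where
  "mu i = (\<Sum>j<s. nat \<bar>i j\<bar>)"

lemma pidx:
  assumes "\<not> isroot i"
  shows "pidx i < s" "i (pidx i) \<noteq> 0"
proof -
  have "\<exists>j. j < s \<and> i j \<noteq> 0" using assms by (auto simp: isroot_def)
  then have "pidx i < s \<and> i (pidx i) \<noteq> 0"
    unfolding pidx_def by (rule LeastI_ex)
  then show "pidx i < s" "i (pidx i) \<noteq> 0" by auto
qed

lemma par_P:
  assumes "(k, i) \<in> P" "\<not> isroot i"
  shows "par (k, i) \<in> P"
proof -
  let ?j = "pidx i"
  have j: "?j < s" "i ?j \<noteq> 0" using pidx[OF assms(2)] by auto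
  have "i ?j \<in> {- nn k..nn k}" using assms(1) j unfolding P_def I_def by (auto simp: PiE_iff)
  then have "i ?j - sgn (i ?j) \<in> {- nn k..nn k}" using j(2)
    by (cases "i ?j > 0") (auto simp: sgn_if)
  then show ?thesis using assms(1) j unfolding P_def I_def par_def
    by (auto simp: PiE_iff extensional_def)
qed

lemma par_mu:
  assumes "\<not> isroot i"
  shows "mu (snd (par (k, i))) < mu i"
proof -
  let ?j = "pidx i"
  have j: "?j < s" "i ?j \<noteq> 0" using pidx[OF assms] by auto
  let ?i' = "i(?j := i ?j - sgn (i ?j))"
  have a: "nat \<bar>?i' ?j\<bar> < nat \<bar>i ?j\<bar>" using j(2)
    by (cases "i ?j > 0") (auto simp: sgn_if)
  have b: "\<And>j'. nat \<bar>?i' j'\<bar> \<le> nat \<bar>i j'\<bar>" using a by auto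
  have "(\<Sum>j<s. nat \<bar>?i' j\<bar>) < (\<Sum>j<s. nat \<bar>i j\<bar>)"
    by (rule sum_strict_mono_ex1) (use a b j in auto)
  then show ?thesis by (simp add: mu_def par_def)
qed

lemma par_dist:
  assumes "\<not> isroot i"
  shows "enorm s (\<lambda>j. pt k i j - pt k (snd (par (k, i))) j) \<le> h k"
proof -
  let ?j = "pidx i"
  have j: "?j < s" "i ?j \<noteq> 0" using pidx[OF assms] by auto
  have "enorm s (\<lambda>j. pt k i j - pt k (snd (par (k, i))) j)
      \<le> (\<Sum>j'<s. \<bar>pt k i j' - pt k (snd (par (k, i))) j'\<bar>)"
    unfolding enorm_def by (rule L2_set_le_sum_abs)
  also have "\<dots> = (\<Sum>j'\<in>{?j}. \<bar>pt k i j' - pt k (snd (par (k, i))) j'\<bar>)"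
    by (rule sum.mono_neutral_right) (use j in \<open>auto simp: par_def pt_def\<close>)
  also have "\<dots> = h k"
    using j hpos[of k] by (cases "i ?j > 0") (auto simp: par_def pt_def algebra_simps abs_mult sgn_if)
  finally show ?thesis .
qed

lemma floor_close:
  fixes a b :: real
  assumes "\<bar>a - b\<bar> \<le> 1"
  shows "floor a - floor b \<in> {-1, 0, 1}"
proof -
  have "floor a \<le> floor (b + 1)" using assms by (intro floor_mono) linarith
  moreover have "floor b \<le> floor (a + 1)" using assms by (intro floor_mono) linarith
  ultimately show ?thesis by auto
qed

lemma code_root:
  assumes "f \<in> LipT s" "isroot i"
  shows "code f (k, i) = 0"
proof -
  have "pt k i = (\<lambda>_. 0)" using assms(2) by (auto simp: pt_def isroot_def)
  then show ?thesis using assms(1) by (simp add: code_def LipT_def)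
qed

lemma code_step:
  assumes "f \<in> LipT s" "(k, i) \<in> P" "\<not> isroot i"
  shows "code f (k, i) - code f (par (k, i)) \<in> {-1, 0, 1}"
proof -
  define i' where "i' = snd (par (k, i))"
  have pi: "par (k, i) = (k, i')" unfolding i'_def par_def by (simp only: fst_conv snd_conv)
  have iP: "(k, i') \<in> P" using par_P[OF assms(2,3)] pi by simp
  have d0: "\<bar>f (pt k i) - f (pt k i')\<bar> \<le> enorm s (\<lambda>j. pt k i j - pt k i' j)"
    by (rule Lip_diff_le[OF assms(1) pt_Rs pt_Rs])
  have d: "\<bar>f (pt k i) - f (pt k i')\<bar> \<le> h k"
    using d0 par_dist[OF assms(3), of k] unfolding i'_def by linarith
  have "\<bar>f (pt k i) / h k - f (pt k i') / h k\<bar> \<le> 1"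
  proof -
    have hk: "h k > 0" by (rule hpos)
    have "f (pt k i) / h k - f (pt k i') / h k = (f (pt k i) - f (pt k i')) / h k"
      by (simp add: diff_divide_distrib)
    also have "\<bar>\<dots>\<bar> = \<bar>f (pt k i) - f (pt k i')\<bar> / h k"
      using hk by (simp add: abs_divide)
    also have "\<dots> \<le> 1" using d hk by (simp only: pos_divide_le_eq)
    finally show ?thesis .
  qed
  from floor_close[OF this] have "floor (f (pt k i) / h k) - floor (f (pt k i') / h k) \<in> {-1, 0, 1}" .
  moreover have "code f (k, i) = floor (f (pt k i) / h k)" using assms(2) by (simp add: code_def)
  moreover have "code f (par (k, i)) = floor (f (pt k i') / h k)" using iP pi by (simp add: code_def)
  ultimately show ?thesis by simp
qed

definition D :: "(nat \<times> (nat \<Rightarrow> int) \<Rightarrow> int) \<Rightarrow> nat \<times> (nat \<Rightarrow> int) \<Rightarrow> int" where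
  "D c = restrict (\<lambda>q. if isroot (snd q) then 0 else c q - c (par q)) P"

lemma code_out: "q \<notin> P \<Longrightarrow> code f q = 0"
  by (cases q) (simp add: code_def)

lemma D_inj: "inj_on D (code ` LipT s)"
proof (rule inj_onI)
  fix c1 c2 assume c1: "c1 \<in> code ` LipT s" and c2: "c2 \<in> code ` LipT s" and eq: "D c1 = D c2"
  obtain f g where f: "f \<in> LipT s" "c1 = code f" and g: "g \<in> LipT s" "c2 = code g"
    using c1 c2 by auto
  have main: "\<forall>k i. mu i = n \<longrightarrow> (k, i) \<in> P \<longrightarrow> c1 (k, i) = c2 (k, i)" for n
  proof (induction n rule: less_induct)
    case (less n)
    show ?case
    proof (intro allI impI)
      fix k i assume mi: "mu i = n" and kiP: "(k, i) \<in> P"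
      show "c1 (k, i) = c2 (k, i)"
      proof (cases "isroot i")
        case True then show ?thesis using f g code_root by simp
      next
        case False
        obtain i' where pi: "par (k, i) = (k, i')" by (simp add: par_def)
        have "(k, i') \<in> P" using par_P[OF kiP False] pi by simp
        moreover have "mu i' < n" using par_mu[OF False, of k] pi mi by simp
        ultimately have "c1 (k, i') = c2 (k, i')" using less by blast
        moreover have "D c1 (k, i) = D c2 (k, i)" using eq by simp
        ultimately show ?thesis using kiP False pi by (simp add: D_def)
      qed
    qed
  qed
  show "c1 = c2"
  proof
    fix q show "c1 q = c2 q"
    proof (cases "q \<in> P")
      case True then show ?thesis using main by (cases q) blast
    next
      case False then show ?thesis using f g code_out by simp
    qed
  qed
qed

lemma card_codes: "card (code ` LipT s) \<le> 3 ^ card P"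
proof -
  have "D ` (code ` LipT s) \<subseteq> PiE P (\<lambda>_. {-1, 0, 1})"
  proof
    fix d assume "d \<in> D ` (code ` LipT s)"
    then obtain f where f: "f \<in> LipT s" "d = D (code f)" by auto
    show "d \<in> PiE P (\<lambda>_. {-1, 0, 1})"
      unfolding f(2) D_def
      using code_step[OF f(1)] by (auto simp: PiE_iff split: prod.splits) fastforce
  qed
  then have "card (code ` LipT s) \<le> card (PiE P (\<lambda>_. {-1::int, 0, 1}))"
    by (intro card_inj_on_le[OF D_inj]) (auto intro: finite_PiE finP)
  also have "\<dots> = 3 ^ card P" using finP by (simp add: card_PiE numeral_3_eq_3)
  finally show ?thesis .
qed

lemma coord_le: "j < s \<Longrightarrow> \<bar>x j\<bar> \<le> enorm s x"
proof -
  assume j: "j < s"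
  have "(x j)\<^sup>2 \<le> (\<Sum>i<s. (x i)\<^sup>2)"
    by (rule member_le_sum) (use j in auto)
  then have "sqrt ((x j)\<^sup>2) \<le> sqrt (\<Sum>i<s. (x i)\<^sup>2)" by (rule real_sqrt_le_mono)
  then show ?thesis by (simp add: enorm_def L2_set_def)
qed

lemma enorm_bound:
  assumes "\<And>j. j < s \<Longrightarrow> \<bar>y j\<bar> \<le> c"
  shows "enorm s y \<le> sqrt (real s) * c"
proof -
  have c: "0 \<le> c" using assms[of 0] s1 by auto
  have "(\<Sum>j<s. (y j)\<^sup>2) \<le> (\<Sum>j<s. c\<^sup>2)"
  proof (rule sum_mono)
    fix j assume "j \<in> {..<s}"
    then have "\<bar>y j\<bar>\<^sup>2 \<le> c\<^sup>2" using assms by (intro power_mono) auto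
    then show "(y j)\<^sup>2 \<le> c\<^sup>2" by simp
  qed
  then have "sqrt (\<Sum>j<s. (y j)\<^sup>2) \<le> sqrt (real s * c\<^sup>2)" by (simp add: real_sqrt_le_mono)
  also have "\<dots> = sqrt (real s) * c" using c by (simp add: real_sqrt_mult)
  finally show ?thesis by (simp add: enorm_def L2_set_def)
qed

lemma round_bound:
  fixes y :: real and n :: int
  assumes "\<bar>y\<bar> \<le> of_int n"
  shows "round y \<in> {-n..n}"
proof -
  have "round y \<le> n" unfolding round_def using assms by (simp add: floor_le_iff; linarith)
  moreover have "- n \<le> round y" unfolding round_def using assms by (simp add: le_floor_iff; linarith)
  ultimately show ?thesis by simp
qed

lemma floor_eq_close:
  fixes a b :: real
  assumes "floor a = floor b"
  shows "\<bar>a - b\<bar> < 1"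
proof -
  have "of_int (floor a) \<le> a" "a < of_int (floor a) + 1" by linarith+
  moreover have "of_int (floor b) \<le> b" "b < of_int (floor b) + 1" by linarith+
  ultimately show ?thesis using assms by linarith
qed

lemma approx:
  assumes f: "f \<in> LipT s" and g: "g \<in> LipT s" and cfg: "code f = code g" and x: "x \<in> Rs s"
  shows "\<bar>f x - g x\<bar> \<le> \<epsilon> * (enorm s x powr (1 + \<delta>) + 1)"
proof -
  define e where "e = enorm s x"
  have e0: "0 \<le> e" unfolding e_def enorm_def by (rule L2_set_nonneg)
  have base: "\<bar>f x - g x\<bar> \<le> 2 * e"
    using Lip_abs_le[OF f x] Lip_abs_le[OF g x] unfolding e_def by linarith
  have pw0: "0 \<le> e powr (1 + \<delta>)" by simp
  show ?thesis
  proof (cases "e > 2 ^ M")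
    case True
    have e_pos: "e > 0" using True by (smt (verit) zero_less_power)
    have "2 powr (real M * \<delta>) = (2 powr real M) powr \<delta>"
      by (simp add: powr_powr)
    also have "\<dots> = (2 ^ M) powr \<delta>" by (simp add: powr_realpow)
    also have "\<dots> \<le> e powr \<delta>" using True dpos by (intro powr_mono2) auto
    finally have "2 / \<epsilon> \<le> e powr \<delta>" using Mlow by linarith
    then have "2 \<le> \<epsilon> * e powr \<delta>" using epos by (simp add: divide_le_eq mult.commute)
    then have "2 * e \<le> \<epsilon> * e powr \<delta> * e" using e0 by (intro mult_right_mono) auto
    also have "\<dots> = \<epsilon> * e powr (1 + \<delta>)" using e_pos by (simp add: powr_add)
    finally have "2 * e \<le> \<epsilon> * e powr (1 + \<delta>)" .
    moreover have "\<epsilon> * (e powr (1 + \<delta>) + 1) = \<epsilon> * e powr (1 + \<delta>) + \<epsilon>"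
      by (simp add: algebra_simps)
    ultimately show ?thesis using base epos unfolding e_def[symmetric] by linarith
  next
    case False
    define k where "k = (LEAST k. e \<le> 2 ^ k)"
    have ek: "e \<le> 2 ^ k" unfolding k_def by (rule LeastI[of _ M]) (use False in linarith)
    have eM: "e \<le> 2 ^ M" using False by linarith
    have kM: "k \<le> M" unfolding k_def by (rule Least_le) (rule eM)
    have kmin: "\<not> e \<le> 2 ^ (k - 1)" if "k > 0"
    proof -
      have "k - 1 < k" using that by simp
      then have "k - 1 < (LEAST k. e \<le> 2 ^ k)" unfolding k_def .
      then show ?thesis by (rule not_less_Least)
    qed
    have hk: "h k > 0" by (rule hpos)
    define i where "i = restrict (\<lambda>j. round (x j / h k)) {..<s}"
    have iI: "i \<in> I k"
      unfolding I_def i_def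
    proof (rule PiE_I)
      fix j assume "j \<in> {..<s}"
      then have "\<bar>x j\<bar> \<le> 2 ^ k" using coord_le[of j x] ek unfolding e_def by auto
      then have "\<bar>x j / h k\<bar> \<le> 2 ^ k / h k" using hk by (simp add: abs_divide divide_right_mono)
      also have "\<dots> \<le> of_int (nn k)" unfolding nn_def by (rule le_of_int_ceiling)
      finally show "restrict (\<lambda>j. round (x j / h k)) {..<s} j \<in> {- nn k..nn k}"
        using round_bound \<open>j \<in> {..<s}\<close> by auto
    qed auto
    then have kiP: "(k, i) \<in> P" using kM by (simp add: P_def)
    define p where "p = pt k i"
    have pR: "p \<in> Rs s" unfolding p_def by (rule pt_Rs)
    have dxp: "enorm s (\<lambda>j. x j - p j) \<le> sqrt (real s) * (h k / 2)"
    proof (rule enorm_bound)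
      fix j assume j: "j < s"
      have pj: "p j = h k * of_int (round (x j / h k))" using j by (simp add: p_def pt_def i_def)
      have "x j - p j = h k * (x j / h k - of_int (round (x j / h k)))"
        using hk unfolding pj by (simp add: right_diff_distrib)
      also have "\<bar>\<dots>\<bar> = h k * \<bar>of_int (round (x j / h k)) - x j / h k\<bar>"
        using hk by (metis abs_minus_commute abs_mult abs_of_pos)
      also have "\<dots> \<le> h k * (1 / 2)"
        using hk of_int_round_abs_le[of "x j / h k"] by (intro mult_left_mono) auto
      finally show "\<bar>x j - p j\<bar> \<le> h k / 2" by simp
    qed
    have dpx: "enorm s (\<lambda>j. p j - x j) = enorm s (\<lambda>j. x j - p j)"
      unfolding enorm_def L2_set_def by (simp add: power2_commute)
    have "floor (f p / h k) = floor (g p / h k)"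
    proof -
      have "code f (k, i) = code g (k, i)" using cfg by simp
      then show ?thesis using kiP unfolding code_def p_def by simp
    qed
    then have "\<bar>f p / h k - g p / h k\<bar> < 1" by (rule floor_eq_close)
    moreover have "f p / h k - g p / h k = (f p - g p) / h k" by (simp add: diff_divide_distrib)
    ultimately have "\<bar>f p - g p\<bar> / h k < 1" using hk by (simp add: abs_divide)
    then have fgp: "\<bar>f p - g p\<bar> < h k" using hk by (simp only: pos_divide_less_eq)
    have "\<bar>f x - f p\<bar> \<le> enorm s (\<lambda>j. x j - p j)" by (rule Lip_diff_le[OF f x pR])
    moreover have "\<bar>g p - g x\<bar> \<le> enorm s (\<lambda>j. p j - x j)" by (rule Lip_diff_le[OF g pR x])
    ultimately have "\<bar>f x - g x\<bar> \<le> sqrt (real s) * h k + h k"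
      using dxp dpx fgp by linarith
    also have "\<dots> \<le> 2 * sqrt (real s) * h k"
      using s1 hk by (simp add: algebra_simps)
    also have "\<dots> = \<epsilon> * 2 powr (real k * (1 + \<delta>)) / 4"
      using s1 by (simp add: h_def)
    finally have A: "\<bar>f x - g x\<bar> \<le> \<epsilon> * 2 powr (real k * (1 + \<delta>)) / 4" .
    show ?thesis
    proof (cases "k = 0")
      case True
      then have "\<bar>f x - g x\<bar> \<le> \<epsilon> / 4" using A by simp
      moreover have "0 \<le> \<epsilon> * e powr (1 + \<delta>)" using epos pw0 by simp
      moreover have "\<epsilon> * (e powr (1 + \<delta>) + 1) = \<epsilon> * e powr (1 + \<delta>) + \<epsilon>"
        by (simp add: algebra_simps)
      ultimately show ?thesis unfolding e_def[symmetric] using epos by linarith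
    next
      case kpos: False
      have lt: "2 ^ (k - 1) < e" using kmin kpos by auto
      define q where "q = 2 powr (real (k - 1) * (1 + \<delta>))"
      have q0: "0 \<le> q" unfolding q_def by simp
      have ex: "real k * (1 + \<delta>) = real (k - 1) * (1 + \<delta>) + (1 + \<delta>)"
        using kpos by (simp add: of_nat_diff algebra_simps)
      have e1: "2 powr (real k * (1 + \<delta>)) = q * 2 powr (1 + \<delta>)"
        unfolding q_def ex by (simp only: powr_add)
      have t4: "2 powr (1 + \<delta>) \<le> 2 powr 2" using dle by (intro powr_mono) auto
      have t4': "(2::real) powr 2 = 4" by simp
      have e2: "q * 2 powr (1 + \<delta>) \<le> q * 4"
        using t4 t4' q0 by (metis mult_left_mono)
      have e3: "q = (2 powr real (k - 1)) powr (1 + \<delta>)"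
        unfolding q_def by (simp add: powr_powr)
      have e4: "(2::real) powr real (k - 1) = 2 ^ (k - 1)" by (simp add: powr_realpow)
      have e5: "(2 ^ (k - 1)) powr (1 + \<delta>) \<le> e powr (1 + \<delta>)" using lt dpos by (intro powr_mono2) auto
      have qe: "q \<le> e powr (1 + \<delta>)" using e3 e4 e5 by simp
      have "2 powr (real k * (1 + \<delta>)) \<le> e powr (1 + \<delta>) * 4"
        using e1 e2 qe by linarith
      then have "2 powr (real k * (1 + \<delta>)) / 4 \<le> e powr (1 + \<delta>)" by simp
      then have "\<epsilon> * 2 powr (real k * (1 + \<delta>)) / 4 \<le> \<epsilon> * e powr (1 + \<delta>)"
        using epos by (simp add: mult_left_mono)
      moreover have "\<epsilon> * (e powr (1 + \<delta>) + 1) = \<epsilon> * e powr (1 + \<delta>) + \<epsilon>"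
        by (simp add: algebra_simps)
      ultimately show ?thesis using A epos unfolding e_def[symmetric] by linarith
    qed
  qed
qed

lemma two_powr_ge: "1 + \<delta> / 2 \<le> 2 powr \<delta>"
proof -
  have "1 + \<delta> * ln 2 \<le> exp (\<delta> * ln 2)" by (rule exp_ge_add_one_self)
  moreover have "\<delta> / 2 \<le> \<delta> * ln 2" using ln2_ge_two_thirds dpos by (simp add: field_simps)
  moreover have "exp (\<delta> * ln 2) = 2 powr \<delta>" by (simp add: powr_def mult.commute)
  ultimately show ?thesis by linarith
qed

lemma geo_bound:
  defines "r \<equiv> 1 / 2 powr \<delta>"
  shows "(\<Sum>k\<le>M. r ^ k) \<le> 4 / \<delta>" and "0 \<le> r" and "r < 1"
proof -
  have p1: "2 powr \<delta> \<ge> 1 + \<delta> / 2" by (rule two_powr_ge)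
  have "2 powr \<delta> \<le> 2 powr (1::real)" using dle by (intro powr_mono) auto
  then have p2: "2 powr \<delta> \<le> 2" by simp
  show r0: "0 \<le> r" unfolding r_def by simp
  have pg: "2 powr \<delta> > 1" using p1 dpos by linarith
  show r1: "r < 1" unfolding r_def using pg by simp
  have "1 - r = (2 powr \<delta> - 1) / 2 powr \<delta>" unfolding r_def using pg by (simp add: field_simps)
  also have "\<dots> \<ge> (\<delta> / 2) / 2"
    using p1 p2 dpos pg by (intro frac_le) auto
  finally have omr: "\<delta> / 4 \<le> 1 - r" by simp
  have "(\<Sum>k\<le>M. r ^ k) = (\<Sum>k<Suc M. r ^ k)" by (simp add: lessThan_Suc_atMost)
  also have "\<dots> = (1 - r ^ Suc M) / (1 - r)"
  proof -
    have hr: "\<not> r = 1" using r1 by simp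
    show ?thesis by (simp only: sum_gp_strict if_not_P[OF hr])
  qed
  also have "\<dots> \<le> 1 / (1 - r)" using r0 r1 by (intro divide_right_mono) auto
  also have "\<dots> \<le> 1 / (\<delta> / 4)" using omr dpos by (intro divide_left_mono) auto
  finally show "(\<Sum>k\<le>M. r ^ k) \<le> 4 / \<delta>" by simp
qed

lemma nn0: "0 \<le> nn k"
proof -
  have "0 \<le> 2 ^ k / h k" using hpos[of k] by simp
  then show ?thesis unfolding nn_def by (metis ceiling_mono ceiling_zero)
qed

lemma card_I: "real (card (I k)) = (2 * of_int (nn k) + 1) ^ s"
proof -
  have "card (I k) = (\<Prod>j<s. card {- nn k..nn k})" unfolding I_def by (simp add: card_PiE)
  also have "\<dots> = nat (2 * nn k + 1) ^ s" by simp
  finally show ?thesis using nn0[of k] by simp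
qed

lemma y_eq: "2 ^ k / h k = 8 * sqrt (real s) / (\<epsilon> * 2 powr (real k * \<delta>))"
proof -
  have "2 powr (real k * (1 + \<delta>)) = 2 powr (real k) * 2 powr (real k * \<delta>)"
    by (simp add: powr_add[symmetric] algebra_simps)
  also have "2 powr (real k) = (2::real) ^ k" by (simp add: powr_realpow)
  finally have "2 powr (real k * (1 + \<delta>)) = 2 ^ k * 2 powr (real k * \<delta>)" .
  then show ?thesis using epos s1 unfolding h_def by (simp add: field_simps)
qed

lemma card_P_bound: "real (card P) \<le> 4 / \<delta> * (40 * sqrt (real s) / \<epsilon>) ^ s"
proof -
  define r where "r = 1 / 2 powr \<delta>"
  have r0: "0 \<le> r" and r1: "r < 1" and gs: "(\<Sum>k\<le>M. r ^ k) \<le> 4 / \<delta>"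
    using geo_bound unfolding r_def by auto
  have fI: "\<forall>k\<in>{..M}. finite (I k)" unfolding I_def by (auto intro: finite_PiE)
  have "card P = (\<Sum>k\<le>M. card (I k))" unfolding P_def by (rule card_SigmaI) (use fI in auto)
  then have "real (card P) = (\<Sum>k\<le>M. real (card (I k)))" by simp
  also have "\<dots> \<le> (\<Sum>k\<le>M. (40 * sqrt (real s) / \<epsilon>) ^ s * r ^ k)"
  proof (rule sum_mono)
    fix k assume "k \<in> {..M}"
    then have kM: "k \<le> M" by simp
    define y where "y = 2 ^ k / h k"
    have yeq: "y = 8 * sqrt (real s) / \<epsilon> * r ^ k"
    proof -
      have "2 powr (real k * \<delta>) = (2 powr \<delta>) ^ k"
        by (simp add: powr_realpow[symmetric] powr_powr mult.commute)
      then show ?thesis unfolding y_def y_eq r_def by (simp add: power_one_over field_simps)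
    qed
    have "2 powr (real k * \<delta>) \<le> 2 powr (real M * \<delta>)"
      using kM dpos by (intro powr_mono) (auto intro: mult_right_mono)
    also have "\<dots> \<le> 4 / \<epsilon>" by (rule Mhigh)
    also have "\<dots> \<le> 8 * sqrt (real s) / \<epsilon>"
    proof -
      have "1 \<le> sqrt (real s)" using s1 by simp
      then have "4 \<le> 8 * sqrt (real s)" by linarith
      then show ?thesis using epos by (simp add: divide_right_mono)
    qed
    finally have "2 powr (real k * \<delta>) \<le> 8 * sqrt (real s) / \<epsilon>" .
    then have y1: "1 \<le> y" unfolding y_def y_eq using epos by (simp add: field_simps)
    have "of_int (nn k) \<le> y + 1" unfolding nn_def y_def by linarith
    then have "2 * of_int (nn k) + 1 \<le> 5 * y" using y1 by linarith
    moreover have "0 \<le> 2 * of_int (nn k) + (1::real)"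
      using nn0[of k] by simp
    ultimately have "(2 * of_int (nn k) + 1) ^ s \<le> (5 * y) ^ s" by (intro power_mono) auto
    also have "(5 * y) ^ s = (40 * sqrt (real s) / \<epsilon>) ^ s * (r ^ k) ^ s"
    proof -
      have "5 * y = (40 * sqrt (real s) / \<epsilon>) * r ^ k" unfolding yeq by simp
      then show ?thesis by (simp only: power_mult_distrib)
    qed
    also have "(r ^ k) ^ s \<le> r ^ k"
      using r0 r1 s1 by (metis power_decreasing power_one_right less_imp_le power_le_one zero_le_power)
    then have "(40 * sqrt (real s) / \<epsilon>) ^ s * (r ^ k) ^ s \<le> (40 * sqrt (real s) / \<epsilon>) ^ s * r ^ k"
      using epos by (intro mult_left_mono) auto
    finally show "real (card (I k)) \<le> (40 * sqrt (real s) / \<epsilon>) ^ s * r ^ k" unfolding card_I .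
  qed
  also have "\<dots> = (40 * sqrt (real s) / \<epsilon>) ^ s * (\<Sum>k\<le>M. r ^ k)" by (simp add: sum_distrib_left)
  also have "\<dots> \<le> (40 * sqrt (real s) / \<epsilon>) ^ s * (4 / \<delta>)"
    using gs epos by (intro mult_left_mono) auto
  finally show ?thesis by (simp add: mult.commute)
qed

lemma finite_codes: "finite (code ` LipT s)"
proof -
  have "D ` (code ` LipT s) \<subseteq> PiE P (\<lambda>_. {-1, 0, 1})"
  proof
    fix d assume "d \<in> D ` (code ` LipT s)"
    then obtain f where f: "f \<in> LipT s" "d = D (code f)" by auto
    show "d \<in> PiE P (\<lambda>_. {-1, 0, 1})"
      unfolding f(2) D_def
      using code_step[OF f(1)] by (auto simp: PiE_iff split: prod.splits) fastforce
  qed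
  moreover have "finite (PiE P (\<lambda>_. {-1::int, 0, 1}))" using finP by (auto intro: finite_PiE)
  ultimately have "finite (D ` (code ` LipT s))" by (rule finite_subset)
  then show ?thesis using D_inj by (rule finite_imageD)
qed

end

lemma cov_single:
  assumes "u \<in> T" "\<And>t. t \<in> T \<Longrightarrow> \<rho> t u \<le> \<epsilon>"
  shows "covering_number T \<rho> \<epsilon> \<noteq> \<infinity> \<and> the_enat (covering_number T \<rho> \<epsilon>) \<le> 1"
proof -
  have "covering_number T \<rho> \<epsilon> \<le> (if finite {u} then enat (card {u}) else \<infinity>)"
    unfolding covering_number_def by (rule INF_lower) (use assms in auto)
  then have le: "covering_number T \<rho> \<epsilon> \<le> enat 1" by simp
  then obtain n where n: "covering_number T \<rho> \<epsilon> = enat n" "n \<le> 1"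
    by (metis enat_ile enat_ord_simps(1))
  then show ?thesis by simp
qed

lemma zero_LipT: "(\<lambda>_. 0) \<in> LipT s"
  unfolding LipT_def enorm_def by (auto intro: L2_set_nonneg)

lemma trivial_case:
  fixes s :: nat and \<epsilon> \<delta> :: real
  assumes "0 < \<epsilon>" "0 < \<delta>" and cs: "1 \<le> \<epsilon> \<or> s = 0"
  shows "covering_number (LipT s) (delta_dist s \<delta>) \<epsilon> \<noteq> \<infinity> \<and>
     ln (real (the_enat (covering_number (LipT s) (delta_dist s \<delta>) \<epsilon>))) \<le> 0"
proof -
  have "covering_number (LipT s) (delta_dist s \<delta>) \<epsilon> \<noteq> \<infinity> \<and>
        the_enat (covering_number (LipT s) (delta_dist s \<delta>) \<epsilon>) \<le> 1"
  proof (rule cov_single[OF zero_LipT])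
    fix f assume f: "f \<in> LipT s"
    show "delta_dist s \<delta> f (\<lambda>_. 0) \<le> \<epsilon>"
    proof (rule delta_dist_le)
      fix x assume x: "x \<in> Rs s"
      define e where "e = enorm s x"
      have e0: "0 \<le> e" unfolding e_def enorm_def by (rule L2_set_nonneg)
      have fe: "\<bar>f x\<bar> \<le> e" using Lip_abs_le[OF f x] unfolding e_def .
      have pw0: "0 \<le> e powr (1 + \<delta>)" by simp
      show "\<bar>f x - 0\<bar> \<le> \<epsilon> * (enorm s x powr (1 + \<delta>) + 1)"
      proof (cases "s = 0")
        case True
        then have "e = 0" by (simp add: e_def enorm_def)
        then show ?thesis using fe assms(1) pw0 unfolding e_def[symmetric] by simp
      next
        case False
        then have e1: "1 \<le> \<epsilon>" using cs by simp
        have "e \<le> e powr (1 + \<delta>) + 1"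
        proof (cases "e \<le> 1")
          case True then show ?thesis using pw0 by linarith
        next
          case False
          then have "e powr 1 \<le> e powr (1 + \<delta>)" using assms(2) by (intro powr_mono) auto
          then show ?thesis using False by simp
        qed
        also have "\<dots> \<le> \<epsilon> * (e powr (1 + \<delta>) + 1)"
        proof -
          have "0 \<le> e powr (1 + \<delta>) + 1" using pw0 by linarith
          from mult_right_mono[OF e1 this] show ?thesis by simp
        qed
        finally show ?thesis using fe unfolding e_def[symmetric] by simp
      qed
    qed
  qed
  then show ?thesis
    using ln_the_enat_le[of "covering_number (LipT s) (delta_dist s \<delta>) \<epsilon>" 1] by simp
qed

lemma main_case:
  fixes s :: nat and \<epsilon> \<delta> :: real
  assumes s1: "1 \<le> s" and ep: "0 < \<epsilon>" "\<epsilon> < 1" and dp: "0 < \<delta>" "\<delta> \<le> 1"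
  shows "covering_number (LipT s) (delta_dist s \<delta>) \<epsilon> \<noteq> \<infinity> \<and>
     ln (real (the_enat (covering_number (LipT s) (delta_dist s \<delta>) \<epsilon>)))
       \<le> (400 * sqrt (real s) / \<epsilon>) ^ s * (1 / \<delta>)"
proof -
  define L where "L = log 2 (2 / \<epsilon>)"
  have L0: "0 < L" unfolding L_def using ep by simp
  define M where "M = nat (ceiling (L / \<delta>))"
  have c: "of_int \<lceil>L / \<delta>\<rceil> - 1 < L / \<delta> \<and> L / \<delta> \<le> of_int \<lceil>L / \<delta>\<rceil>"
    by (rule ceiling_correct)
  have "0 < L / \<delta>" using L0 dp by simp
  then have "0 \<le> \<lceil>L / \<delta>\<rceil>" by simp
  then have rM: "real M = of_int \<lceil>L / \<delta>\<rceil>" unfolding M_def by simp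
  have M1: "L / \<delta> \<le> real M" using c rM by linarith
  have M2: "real M < L / \<delta> + 1" using c rM by linarith
  have 2: "2 powr L = 2 / \<epsilon>" unfolding L_def using ep by simp
  have Mlow: "2 / \<epsilon> \<le> 2 powr (real M * \<delta>)"
  proof -
    have "L \<le> real M * \<delta>" using M1 dp by (simp add: divide_le_eq)
    then have "2 powr L \<le> 2 powr (real M * \<delta>)" by (intro powr_mono) auto
    then show ?thesis using 2 by simp
  qed
  have Mhigh: "2 powr (real M * \<delta>) \<le> 4 / \<epsilon>"
  proof -
    have "real M * \<delta> < (L / \<delta> + 1) * \<delta>" using M2 dp by (intro mult_strict_right_mono) auto
    also have "\<dots> = L + \<delta>" using dp by (simp add: field_simps)
    finally have "real M * \<delta> \<le> L + 1" using dp by linarith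
    then have "2 powr (real M * \<delta>) \<le> 2 powr (L + 1)" by (intro powr_mono) auto
    also have "\<dots> = 2 powr L * 2" by (simp add: powr_add)
    finally show ?thesis using 2 by simp
  qed
  interpret covsetup s \<epsilon> \<delta> M
    by unfold_locales (use s1 ep dp Mlow Mhigh in auto)
  have cv: "covering_number (LipT s) (delta_dist s \<delta>) \<epsilon> \<noteq> \<infinity> \<and>
     the_enat (covering_number (LipT s) (delta_dist s \<delta>) \<epsilon>) \<le> card (code ` LipT s)"
  proof (rule cov_from_code[OF finite_codes subset_refl])
    fix f g assume "f \<in> LipT s" "g \<in> LipT s" "code f = code g"
    then show "delta_dist s \<delta> f g \<le> \<epsilon>" by (intro delta_dist_le approx)
  qed
  then have le: "the_enat (covering_number (LipT s) (delta_dist s \<delta>) \<epsilon>) \<le> 3 ^ card P"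
    using card_codes by linarith
  have "ln (real (the_enat (covering_number (LipT s) (delta_dist s \<delta>) \<epsilon>))) \<le> ln (real (3 ^ card P))"
    by (rule ln_the_enat_le[OF le]) simp
  also have "\<dots> = real (card P) * ln 3" by (simp add: ln_realpow)
  also have "\<dots> \<le> real (card P) * 2"
  proof -
    have "ln (3::real) \<le> 3 - 1" by (rule ln_le_minus_one) simp
    then show ?thesis by (intro mult_left_mono) auto
  qed
  also have "\<dots> \<le> 4 / \<delta> * (40 * sqrt (real s) / \<epsilon>) ^ s * 2"
    using card_P_bound by (intro mult_right_mono) auto
  also have "\<dots> = (40 * sqrt (real s) / \<epsilon>) ^ s * 8 * (1 / \<delta>)" by simp
  also have "\<dots> \<le> (40 * sqrt (real s) / \<epsilon>) ^ s * 10 ^ s * (1 / \<delta>)"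
  proof -
    have "(8::real) \<le> 10 ^ 1" by simp
    also have "(10::real) ^ 1 \<le> 10 ^ s" using s1 by (intro power_increasing) auto
    finally have "(8::real) \<le> 10 ^ s" .
    then show ?thesis using ep dp by (intro mult_right_mono mult_left_mono) auto
  qed
  also have "\<dots> = (400 * sqrt (real s) / \<epsilon>) ^ s * (1 / \<delta>)"
  proof -
    have "400 * sqrt (real s) / \<epsilon> = (40 * sqrt (real s) / \<epsilon>) * 10" by simp
    then show ?thesis by (simp only: power_mult_distrib)
  qed
  finally show ?thesis using cv by simp
qed

theorem lemma2p4:
  shows "\<exists>C::real. C \<ge> 1 \<and> (\<forall>(s::nat) (\<epsilon>::real) (\<delta>::real). \<epsilon> > 0 \<and> 0 < \<delta> \<and> \<delta> \<le> 1 \<longrightarrow>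
     covering_number (LipT s) (delta_dist s \<delta>) \<epsilon> \<noteq> \<infinity> \<and>
     ln (real (the_enat (covering_number (LipT s) (delta_dist s \<delta>) \<epsilon>)))
       \<le> (C * sqrt (real s) / \<epsilon>) ^ s * (1 / \<delta>))"
proof -
  have H: "\<forall>(s::nat) (\<epsilon>::real) (\<delta>::real). \<epsilon> > 0 \<and> 0 < \<delta> \<and> \<delta> \<le> 1 \<longrightarrow>
     covering_number (LipT s) (delta_dist s \<delta>) \<epsilon> \<noteq> \<infinity> \<and>
     ln (real (the_enat (covering_number (LipT s) (delta_dist s \<delta>) \<epsilon>)))
       \<le> ((400::real) * sqrt (real s) / \<epsilon>) ^ s * (1 / \<delta>)"
  proof (intro allI impI)
    fix s :: nat and \<epsilon> \<delta> :: real
    assume a: "\<epsilon> > 0 \<and> 0 < \<delta> \<and> \<delta> \<le> 1"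
    show "covering_number (LipT s) (delta_dist s \<delta>) \<epsilon> \<noteq> \<infinity> \<and>
       ln (real (the_enat (covering_number (LipT s) (delta_dist s \<delta>) \<epsilon>)))
         \<le> (400 * sqrt (real s) / \<epsilon>) ^ s * (1 / \<delta>)"
    proof (cases "1 \<le> \<epsilon> \<or> s = 0")
      case True
      have "0 \<le> (400 * sqrt (real s) / \<epsilon>) ^ s * (1 / \<delta>)" using a by simp
      then show ?thesis using trivial_case[of \<epsilon> \<delta> s] a True by linarith
    next
      case False
      then show ?thesis using main_case[of s \<epsilon> \<delta>] a by simp
    qed
  qed
  show ?thesis by (rule exI[of _ 400], rule conjI[OF _ H]) simp
qed

end
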